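(* Let $f:\mathbb{R}^n\to\mathbb{R}^m$, $F:\mathbb{R}^n\rightrightarrows\mathbb{R}^m$, $\bar x\in\mathbb{R}^n$ and $\bar v\in(f+F)(\bar x)$. Assume $f$ is calm at $\bar x$: there exist $\ell>0$ and a neighborhood $U$ of $\bar x$ with $\|f(x)-f(\bar x)\|\le\ell\|x-\bar x\|$ for all $x\in U$. Then $$\widehat D^*f(\bar x)(w)+\widehat D^*F\big(\bar x,\bar v-f(\bar x)\big)(w)\subset\widehat D^*(f+F)(\bar x,\bar v)(w)\quad\text{for all }w\in\mathbb{R}^m.$$ If in addition $f$ is Fréchet differentiable at $\bar x$, this inclusion holds as an equality.
   Context: Regular normal cone: $\widehat N_\Omega(\bar z):=\{v:\limsup_{z\to\bar z,\,z\in\Omega}\frac{\langle v,z-\bar z\rangle}{\|z-\bar z\|}\le0\}$. Regular coderivative of $F:\mathbb{R}^n\rightrightarrows\mathbb{R}^m$ at $(\bar x,\bar y)\in\operatorname{gph}F$: $\widehat D^*F(\bar x,\bar y)(w):=\{v:(v,-w)\in\widehat N_{\operatorname{gph}F}(\bar x,\bar y)\}$; for single-valued $f$, $\widehat D^*f(\bar x):=\widehat D^*f(\bar x,f(\bar x))$. $(f+F)(x):=f(x)+F(x)$. *)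

theory Defs
  imports "HOL-Analysis.Analysis"
begin

definition regular_normal_cone :: "'a::real_inner set \<Rightarrow> 'a \<Rightarrow> 'a set" where
  "regular_normal_cone \<Omega> zbar =
     {v. Limsup (at zbar within \<Omega>) (\<lambda>z. ereal (inner v (z - zbar) / norm (z - zbar))) \<le> 0}"

definition graph :: "('a \<Rightarrow> 'b set) \<Rightarrow> ('a \<times> 'b) set" where
  "graph F = {(x, y). y \<in> F x}"

definition regular_coderiv :: "('a::real_inner \<Rightarrow> 'b::real_inner set) \<Rightarrow> 'a \<Rightarrow> 'b \<Rightarrow> 'b \<Rightarrow> 'a set" where
  "regular_coderiv F xbar ybar w = {v. (v, - w) \<in> regular_normal_cone (graph F) (xbar, ybar)}"

definition regular_coderiv_fun :: "('a::real_inner \<Rightarrow> 'b::real_inner) \<Rightarrow> 'a \<Rightarrow> 'b \<Rightarrow> 'a set" where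
  "regular_coderiv_fun f xbar w = regular_coderiv (\<lambda>x. {f x}) xbar (f xbar) w"

definition map_plus :: "('a \<Rightarrow> 'b::plus) \<Rightarrow> ('a \<Rightarrow> 'b set) \<Rightarrow> 'a \<Rightarrow> 'b set" where
  "map_plus f F x = (\<lambda>y. f x + y) ` F x"

definition msum :: "'a::plus set \<Rightarrow> 'a set \<Rightarrow> 'a set" where
  "msum A B = {a + b | a b. a \<in> A \<and> b \<in> B}"

definition calm_at :: "('a::real_normed_vector \<Rightarrow> 'b::real_normed_vector) \<Rightarrow> 'a \<Rightarrow> bool" where
  "calm_at f xbar \<longleftrightarrow> (\<exists>l>0. \<exists>U. open U \<and> xbar \<in> U \<and>
      (\<forall>x\<in>U. norm (f x - f xbar) \<le> l * norm (x - xbar)))"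

end

theory Submission imports Defs begin

lemma nc_iff:
  fixes v zb :: "'a::real_inner"
  shows "v \<in> regular_normal_cone \<Omega> zb \<longleftrightarrow>
    (\<forall>e>0. \<exists>d>0. \<forall>z\<in>\<Omega>. norm (z - zb) < d \<longrightarrow> inner v (z - zb) \<le> e * norm (z - zb))"
proof
  assume "v \<in> regular_normal_cone \<Omega> zb"
  hence L: "\<forall>y>0. eventually (\<lambda>z. y > ereal (inner v (z - zb) / norm (z - zb))) (at zb within \<Omega>)"
    unfolding regular_normal_cone_def by (simp add: Limsup_le_iff)
  show "\<forall>e>0. \<exists>d>0. \<forall>z\<in>\<Omega>. norm (z - zb) < d \<longrightarrow> inner v (z - zb) \<le> e * norm (z - zb)"
  proof (intro allI impI)
    fix e :: real assume e: "e > 0"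
    from L[rule_format, of "ereal e"] e obtain d where d: "d > 0"
      and H: "\<forall>z\<in>\<Omega>. z \<noteq> zb \<and> dist z zb < d \<longrightarrow> inner v (z - zb) / norm (z - zb) < e"
      unfolding eventually_at by auto
    show "\<exists>d>0. \<forall>z\<in>\<Omega>. norm (z - zb) < d \<longrightarrow> inner v (z - zb) \<le> e * norm (z - zb)"
    proof (intro exI[of _ d] conjI ballI impI d)
      fix z assume z: "z \<in> \<Omega>" "norm (z - zb) < d"
      show "inner v (z - zb) \<le> e * norm (z - zb)"
      proof (cases "z = zb")
        case False
        hence "norm (z - zb) > 0" by simp
        moreover have "inner v (z - zb) / norm (z - zb) < e" using H z False by (simp add: dist_norm)
        ultimately show ?thesis by (simp add: divide_less_eq)
      qed simp
    qed
  qed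
next
  assume R: "\<forall>e>0. \<exists>d>0. \<forall>z\<in>\<Omega>. norm (z - zb) < d \<longrightarrow> inner v (z - zb) \<le> e * norm (z - zb)"
  have "\<forall>y>0. eventually (\<lambda>z. y > ereal (inner v (z - zb) / norm (z - zb))) (at zb within \<Omega>)"
  proof (intro allI impI)
    fix y :: ereal assume y: "y > 0"
    show "eventually (\<lambda>z. y > ereal (inner v (z - zb) / norm (z - zb))) (at zb within \<Omega>)"
    proof (cases y)
      case (real r)
      with y have r: "r > 0" by simp
      from R[rule_format, of "r/2"] r obtain d where d: "d > 0"
        and H: "\<forall>z\<in>\<Omega>. norm (z - zb) < d \<longrightarrow> inner v (z - zb) \<le> r/2 * norm (z - zb)" by auto
      show ?thesis unfolding eventually_at
      proof (intro exI[of _ d] conjI ballI impI d)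
        fix z assume z: "z \<in> \<Omega>" "z \<noteq> zb \<and> dist z zb < d"
        hence n: "norm (z - zb) > 0" by simp
        have "inner v (z - zb) \<le> r/2 * norm (z - zb)" using H z by (simp add: dist_norm)
        hence "inner v (z - zb) / norm (z - zb) \<le> r/2" using n by (simp add: divide_le_eq)
        hence "inner v (z - zb) / norm (z - zb) < r" using r by linarith
        thus "y > ereal (inner v (z - zb) / norm (z - zb))" using real by simp
      qed
    next
      case PInf thus ?thesis by simp
    next
      case MInf thus ?thesis using y by simp
    qed
  qed
  thus "v \<in> regular_normal_cone \<Omega> zb"
    unfolding regular_normal_cone_def by (simp add: Limsup_le_iff)
qed

lemma nc_graph_iff:
  fixes u :: "'a::real_inner" and w :: "'b::real_inner"
  shows "(u, -w) \<in> regular_normal_cone (graph F) (xb, yb) \<longleftrightarrow>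
    (\<forall>e>0. \<exists>d>0. \<forall>x y. y \<in> F x \<longrightarrow> norm (x - xb, y - yb) < d \<longrightarrow>
        inner u (x - xb) - inner w (y - yb) \<le> e * norm (x - xb, y - yb))"
  unfolding nc_iff graph_def by auto

lemma coderiv_iff:
  "v \<in> regular_coderiv F xb yb w \<longleftrightarrow>
    (\<forall>e>0. \<exists>d>0. \<forall>x y. y \<in> F x \<longrightarrow> norm (x - xb, y - yb) < d \<longrightarrow>
        inner v (x - xb) - inner w (y - yb) \<le> e * norm (x - xb, y - yb))"
  unfolding regular_coderiv_def by (simp add: nc_graph_iff)

lemma coderiv_fun_iff:
  "v \<in> regular_coderiv_fun f xb w \<longleftrightarrow>
    (\<forall>e>0. \<exists>d>0. \<forall>x. norm (x - xb, f x - f xb) < d \<longrightarrow>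
        inner v (x - xb) - inner w (f x - f xb) \<le> e * norm (x - xb, f x - f xb))"
  unfolding regular_coderiv_fun_def coderiv_iff by simp

lemma calm_ball:
  assumes "open U" "xb \<in> U"
  obtains dU where "dU > 0" "\<And>x. norm (x - xb) < dU \<Longrightarrow> x \<in> U"
proof -
  from assms obtain dU where "dU > 0" "ball xb dU \<subseteq> U" using open_contains_ball by blast
  moreover have "\<And>x. norm (x - xb) < dU \<Longrightarrow> x \<in> U"
    using \<open>ball xb dU \<subseteq> U\<close> by (auto simp: dist_norm norm_minus_commute)
  ultimately show ?thesis using that by blast
qed

lemma stepA:
  fixes f :: "'a::real_inner \<Rightarrow> 'b::real_inner"
  assumes l: "l > 0" and dU: "dU > 0" "\<And>x. norm (x - xb) < dU \<Longrightarrow> norm (f x - f xb) \<le> l * norm (x - xb)"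
    and u: "u \<in> regular_coderiv_fun f xb w"
  shows "\<forall>e>0. \<exists>d>0. \<forall>x. norm (x - xb) < d \<longrightarrow> inner u (x-xb) - inner w (f x - f xb) \<le> e * norm (x - xb)"
proof (intro allI impI)
  fix e :: real assume e: "e > 0"
  have el: "e/(1+l) > 0" using e l by simp
  from u[unfolded coderiv_fun_iff, rule_format, OF el] obtain d1 where d1: "d1 > 0"
    and H: "\<And>x. norm (x - xb, f x - f xb) < d1 \<Longrightarrow>
        inner u (x - xb) - inner w (f x - f xb) \<le> e/(1+l) * norm (x - xb, f x - f xb)" by blast
  show "\<exists>d>0. \<forall>x. norm (x - xb) < d \<longrightarrow> inner u (x-xb) - inner w (f x - f xb) \<le> e * norm (x - xb)"
  proof (intro exI[of _ "min dU (d1/(1+l))"] conjI allI impI)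
    show "min dU (d1/(1+l)) > 0" using dU d1 l by simp
    fix x assume x: "norm (x - xb) < min dU (d1/(1+l))"
    have fb: "norm (f x - f xb) \<le> l * norm (x - xb)" using x dU by simp
    have np: "norm (x - xb, f x - f xb) \<le> (1+l) * norm (x - xb)"
      using norm_Pair_le[of "x - xb" "f x - f xb"] fb by (simp add: algebra_simps)
    have "(1+l) * norm (x - xb) < d1" using x l by (simp add: less_divide_eq mult.commute)
    hence "inner u (x - xb) - inner w (f x - f xb) \<le> e/(1+l) * norm (x - xb, f x - f xb)"
      using np by (intro H) linarith
    also have "\<dots> \<le> e/(1+l) * ((1+l) * norm (x - xb))" using np el by (intro mult_left_mono) auto
    also have "\<dots> = e * norm (x - xb)" using l by simp
    finally show "inner u (x-xb) - inner w (f x - f xb) \<le> e * norm (x - xb)" .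
  qed
qed

lemma part1:
  fixes f :: "'a::real_inner \<Rightarrow> 'b::real_inner"
  assumes l: "l > 0" and U: "open U" "xb \<in> U" and cal: "\<forall>x\<in>U. norm (f x - f xb) \<le> l * norm (x - xb)"
    and u: "u \<in> regular_coderiv_fun f xb w" and v: "v \<in> regular_coderiv F xb (vb - f xb) w"
  shows "u + v \<in> regular_coderiv (map_plus f F) xb vb w"
proof -
  obtain dU where dU: "dU > 0" "\<And>x. norm (x - xb) < dU \<Longrightarrow> x \<in> U" using calm_ball[OF U] by blast
  have fbU: "\<And>x. norm (x - xb) < dU \<Longrightarrow> norm (f x - f xb) \<le> l * norm (x - xb)" using dU cal by blast
  have A: "\<forall>e>0. \<exists>d>0. \<forall>x. norm (x - xb) < d \<longrightarrow> inner u (x-xb) - inner w (f x - f xb) \<le> e * norm (x - xb)"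
    by (rule stepA[OF l dU(1) fbU u])
  show ?thesis unfolding coderiv_iff
  proof (intro allI impI)
    fix e :: real assume e: "e > 0"
    have e2: "e/2 > 0" using e by simp
    have e3: "e/(2*(2+l)) > 0" using e l by simp
    from A[rule_format, OF e2] obtain d1 where d1: "d1 > 0"
      and HA: "\<And>x. norm (x - xb) < d1 \<Longrightarrow> inner u (x-xb) - inner w (f x - f xb) \<le> e/2 * norm (x - xb)" by blast
    from v[unfolded coderiv_iff, rule_format, OF e3] obtain d2 where d2: "d2 > 0"
      and Hv: "\<And>x z. z \<in> F x \<Longrightarrow> norm (x - xb, z - (vb - f xb)) < d2 \<Longrightarrow>
        inner v (x - xb) - inner w (z - (vb - f xb)) \<le> e/(2*(2+l)) * norm (x - xb, z - (vb - f xb))" by blast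
    show "\<exists>d>0. \<forall>x y. y \<in> map_plus f F x \<longrightarrow> norm (x - xb, y - vb) < d \<longrightarrow>
        inner (u + v) (x - xb) - inner w (y - vb) \<le> e * norm (x - xb, y - vb)"
    proof (intro exI[of _ "min dU (min d1 (d2/(2+l)))"] conjI allI impI)
      show "min dU (min d1 (d2/(2+l))) > 0" using dU d1 d2 l by simp
      fix x y assume y: "y \<in> map_plus f F x" and N: "norm (x - xb, y - vb) < min dU (min d1 (d2/(2+l)))"
      obtain z where z: "z \<in> F x" "y = f x + z" using y unfolding map_plus_def by auto
      define a where "a = norm (x - xb)"
      define b where "b = norm (y - vb)"
      define Nn where "Nn = norm (x - xb, y - vb)"
      have aN: "a \<le> Nn" unfolding a_def Nn_def by (rule norm_fst_le)
      have bN: "b \<le> Nn" unfolding b_def Nn_def by (rule norm_snd_le)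
      have a0: "a \<ge> 0" unfolding a_def by simp
      have fb: "norm (f x - f xb) \<le> l * a" using fbU aN N unfolding a_def Nn_def by simp
      have zeq: "z - (vb - f xb) = (y - vb) - (f x - f xb)" using z by (simp add: algebra_simps)
      have nz: "norm (z - (vb - f xb)) \<le> b + l * a"
        unfolding zeq b_def using norm_triangle_ineq4[of "y - vb" "f x - f xb"] fb by linarith
      have laN: "l * a \<le> l * Nn" using aN l by simp
      have np2: "norm (x - xb, z - (vb - f xb)) \<le> (2+l) * Nn"
        using norm_Pair_le[of "x - xb" "z - (vb - f xb)"] nz aN bN laN unfolding a_def
        by (simp add: algebra_simps)
      have "(2+l) * Nn < d2" using N l unfolding Nn_def by (simp add: less_divide_eq mult.commute)
      hence "inner v (x - xb) - inner w (z - (vb - f xb)) \<le> e/(2*(2+l)) * norm (x - xb, z - (vb - f xb))"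
        using np2 by (intro Hv z) linarith
      also have "\<dots> \<le> e/(2*(2+l)) * ((2+l) * Nn)" using np2 e3 by (intro mult_left_mono) auto
      also have "\<dots> = e/2 * Nn" using l by (simp add: field_simps)
      finally have I2: "inner v (x - xb) - inner w (z - (vb - f xb)) \<le> e/2 * Nn" .
      have "inner u (x-xb) - inner w (f x - f xb) \<le> e/2 * a" using HA N aN unfolding a_def Nn_def by simp
      also have "\<dots> \<le> e/2 * Nn" using aN e2 by (intro mult_left_mono) auto
      finally have I1: "inner u (x-xb) - inner w (f x - f xb) \<le> e/2 * Nn" .
      have eq: "inner (u + v) (x - xb) - inner w (y - vb) =
          (inner u (x-xb) - inner w (f x - f xb)) + (inner v (x - xb) - inner w (z - (vb - f xb)))"
        unfolding zeq by (simp add: inner_add_left inner_diff_right)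
      show "inner (u + v) (x - xb) - inner w (y - vb) \<le> e * norm (x - xb, y - vb)"
        using I1 I2 unfolding eq Nn_def by linarith
    qed
  qed
qed

lemma wbound:
  fixes w :: "'b::real_inner"
  assumes e: "e > 0" and a: "a \<ge> 0" and r: "norm r \<le> e/(norm w + 1) * a"
  shows "inner w r \<le> e * a"
proof -
  have nw: "norm w + 1 > 0" using norm_ge_zero[of w] by linarith
  have q: "norm w / (norm w + 1) \<le> 1" using nw by (simp add: divide_le_eq)
  have "e * (norm w / (norm w + 1)) \<le> e * 1" using e q by (intro mult_left_mono) auto
  hence k: "norm w * (e/(norm w + 1)) \<le> e" by (simp add: ac_simps)
  have "inner w r \<le> norm w * norm r" by (rule norm_cauchy_schwarz)
  also have "\<dots> \<le> norm w * (e/(norm w + 1) * a)" using r by (intro mult_left_mono) auto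
  also have "\<dots> = (norm w * (e/(norm w + 1))) * a" by simp
  also have "\<dots> \<le> e * a" using k a by (intro mult_right_mono) auto
  finally show ?thesis .
qed

lemma part2u:
  fixes f :: "'a::euclidean_space \<Rightarrow> 'b::euclidean_space"
  assumes D: "(f has_derivative f') (at xb)"
  shows "adjoint f' w \<in> regular_coderiv_fun f xb w"
proof -
  have lin: "linear f'" using D has_derivative_linear by blast
  have adj: "\<And>h. inner (adjoint f' w) h = inner w (f' h)"
    using adjoint_works[OF lin] by (simp add: inner_commute)
  show ?thesis unfolding coderiv_fun_iff
  proof (intro allI impI)
    fix e :: real assume e: "e > 0"
    have e': "e/(norm w + 1) > 0" using e norm_ge_zero[of w] by (intro divide_pos_pos) linarith+
    from D[unfolded has_derivative_at_alt] e' obtain d where d: "d > 0"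
      and H: "\<And>y. norm (y - xb) < d \<Longrightarrow> norm (f y - f xb - f' (y - xb)) \<le> e/(norm w + 1) * norm (y - xb)"
      by blast
    show "\<exists>d>0. \<forall>x. norm (x - xb, f x - f xb) < d \<longrightarrow>
        inner (adjoint f' w) (x - xb) - inner w (f x - f xb) \<le> e * norm (x - xb, f x - f xb)"
    proof (intro exI[of _ d] conjI allI impI d)
      fix x assume x: "norm (x - xb, f x - f xb) < d"
      have aN: "norm (x - xb) \<le> norm (x - xb, f x - f xb)" by (rule norm_fst_le)
      have r0: "norm (f x - f xb - f' (x - xb)) \<le> e/(norm w + 1) * norm (x - xb)"
        using H[of x] x aN by linarith
      have r: "norm (-(f x - f xb - f' (x - xb))) \<le> e/(norm w + 1) * norm (x - xb)"
        by (subst norm_minus_cancel) (rule r0)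
      have "inner (adjoint f' w) (x - xb) - inner w (f x - f xb) = inner w (-(f x - f xb - f' (x - xb)))"
        by (simp add: adj inner_diff_right linear_diff[OF lin])
      also have "\<dots> \<le> e * norm (x - xb)" by (rule wbound[OF e _ r]) simp
      also have "\<dots> \<le> e * norm (x - xb, f x - f xb)" using aN e by simp
      finally show "inner (adjoint f' w) (x - xb) - inner w (f x - f xb) \<le> e * norm (x - xb, f x - f xb)" .
    qed
  qed
qed

lemma part2p:
  fixes f :: "'a::euclidean_space \<Rightarrow> 'b::euclidean_space"
  assumes l: "l > 0" and U: "open U" "xb \<in> U" and cal: "\<forall>x\<in>U. norm (f x - f xb) \<le> l * norm (x - xb)"
    and D: "(f has_derivative f') (at xb)"
    and p: "p \<in> regular_coderiv (map_plus f F) xb vb w"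
  shows "p - adjoint f' w \<in> regular_coderiv F xb (vb - f xb) w"
proof -
  have lin: "linear f'" using D has_derivative_linear by blast
  have adj: "\<And>h. inner (adjoint f' w) h = inner w (f' h)"
    using adjoint_works[OF lin] by (simp add: inner_commute)
  obtain dU where dU: "dU > 0" "\<And>x. norm (x - xb) < dU \<Longrightarrow> x \<in> U" using calm_ball[OF U] by blast
  have fbU: "\<And>x. norm (x - xb) < dU \<Longrightarrow> norm (f x - f xb) \<le> l * norm (x - xb)" using dU cal by blast
  show ?thesis unfolding coderiv_iff
  proof (intro allI impI)
    fix e :: real assume e: "e > 0"
    have e2: "e/2 > 0" using e by simp
    have e3: "e/(2*(2+l)) > 0" using e l by simp
    have e4: "(e/2)/(norm w + 1) > 0" using e norm_ge_zero[of w] by (intro divide_pos_pos) linarith+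
    from p[unfolded coderiv_iff, rule_format, OF e3] obtain dp where dp: "dp > 0"
      and Hp: "\<And>x y. y \<in> map_plus f F x \<Longrightarrow> norm (x - xb, y - vb) < dp \<Longrightarrow>
        inner p (x - xb) - inner w (y - vb) \<le> e/(2*(2+l)) * norm (x - xb, y - vb)" by blast
    from D[unfolded has_derivative_at_alt] e4 obtain dd where dd: "dd > 0"
      and HD: "\<And>y. norm (y - xb) < dd \<Longrightarrow> norm (f y - f xb - f' (y - xb)) \<le> (e/2)/(norm w + 1) * norm (y - xb)"
      by blast
    show "\<exists>d>0. \<forall>x z. z \<in> F x \<longrightarrow> norm (x - xb, z - (vb - f xb)) < d \<longrightarrow>
        inner (p - adjoint f' w) (x - xb) - inner w (z - (vb - f xb)) \<le> e * norm (x - xb, z - (vb - f xb))"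
    proof (intro exI[of _ "min dU (min dd (dp/(2+l)))"] conjI allI impI)
      show "min dU (min dd (dp/(2+l))) > 0" using dU dd dp l by simp
      fix x z assume z: "z \<in> F x" and N: "norm (x - xb, z - (vb - f xb)) < min dU (min dd (dp/(2+l)))"
      define y where "y = f x + z"
      have y: "y \<in> map_plus f F x" using z unfolding y_def map_plus_def by auto
      define a where "a = norm (x - xb)"
      define c where "c = norm (z - (vb - f xb))"
      define Nn where "Nn = norm (x - xb, z - (vb - f xb))"
      have aN: "a \<le> Nn" unfolding a_def Nn_def by (rule norm_fst_le)
      have cN: "c \<le> Nn" unfolding c_def Nn_def by (rule norm_snd_le)
      have a0: "a \<ge> 0" unfolding a_def by simp
      have fb: "norm (f x - f xb) \<le> l * a" using fbU aN N unfolding a_def Nn_def by simp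
      have yeq: "y - vb = (z - (vb - f xb)) + (f x - f xb)" unfolding y_def by (simp add: algebra_simps)
      have ny: "norm (y - vb) \<le> c + l * a"
        unfolding yeq c_def using norm_triangle_ineq[of "z - (vb - f xb)" "f x - f xb"] fb by linarith
      have laN: "l * a \<le> l * Nn" using aN l by simp
      have np2: "norm (x - xb, y - vb) \<le> (2+l) * Nn"
        using norm_Pair_le[of "x - xb" "y - vb"] ny aN cN laN unfolding a_def
        by (simp add: algebra_simps)
      have "(2+l) * Nn < dp" using N l unfolding Nn_def by (simp add: less_divide_eq mult.commute)
      hence "inner p (x - xb) - inner w (y - vb) \<le> e/(2*(2+l)) * norm (x - xb, y - vb)"
        using np2 by (intro Hp y) linarith
      also have "\<dots> \<le> e/(2*(2+l)) * ((2+l) * Nn)" using np2 e3 by (intro mult_left_mono) auto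
      also have "\<dots> = e/2 * Nn" using l by (simp add: field_simps)
      finally have I1: "inner p (x - xb) - inner w (y - vb) \<le> e/2 * Nn" .
      have r: "norm (f x - f xb - f' (x - xb)) \<le> (e/2)/(norm w + 1) * a"
        using HD N aN unfolding a_def Nn_def by simp
      have "inner w (f x - f xb - f' (x - xb)) \<le> e/2 * a" by (rule wbound[OF e2 a0 r])
      also have "\<dots> \<le> e/2 * Nn" using aN e2 by (intro mult_left_mono) auto
      finally have I2: "inner w (f x - f xb - f' (x - xb)) \<le> e/2 * Nn" .
      have eq: "inner (p - adjoint f' w) (x - xb) - inner w (z - (vb - f xb)) =
          (inner p (x - xb) - inner w (y - vb)) + inner w (f x - f xb - f' (x - xb))"
        unfolding yeq by (simp add: inner_diff_left inner_add_right inner_diff_right adj linear_diff[OF lin])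
      show "inner (p - adjoint f' w) (x - xb) - inner w (z - (vb - f xb)) \<le> e * norm (x - xb, z - (vb - f xb))"
        using I1 I2 unfolding eq Nn_def by linarith
    qed
  qed
qed

theorem lemma6p2:
  fixes f :: "real ^ 'n \<Rightarrow> real ^ 'm"
    and F :: "real ^ 'n \<Rightarrow> (real ^ 'm) set"
    and xbar :: "real ^ 'n" and vbar :: "real ^ 'm"
  assumes "vbar \<in> map_plus f F xbar"
    and "calm_at f xbar"
  shows "(\<forall>w. msum (regular_coderiv_fun f xbar w) (regular_coderiv F xbar (vbar - f xbar) w)
                 \<subseteq> regular_coderiv (map_plus f F) xbar vbar w)
       \<and> (f differentiable (at xbar) \<longrightarrow>
          (\<forall>w. msum (regular_coderiv_fun f xbar w) (regular_coderiv F xbar (vbar - f xbar) w)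
                 = regular_coderiv (map_plus f F) xbar vbar w))"
proof -
  from assms(2) obtain l U where l: "l > 0" and U: "open U" "xbar \<in> U"
    and cal: "\<forall>x\<in>U. norm (f x - f xbar) \<le> l * norm (x - xbar)"
    unfolding calm_at_def by blast
  have P1: "\<forall>w. msum (regular_coderiv_fun f xbar w) (regular_coderiv F xbar (vbar - f xbar) w)
                 \<subseteq> regular_coderiv (map_plus f F) xbar vbar w"
    unfolding msum_def using part1[OF l U cal] by blast
  moreover have "f differentiable (at xbar) \<longrightarrow>
          (\<forall>w. msum (regular_coderiv_fun f xbar w) (regular_coderiv F xbar (vbar - f xbar) w)
                 = regular_coderiv (map_plus f F) xbar vbar w)"
  proof (intro impI allI equalityI)
    fix w assume "f differentiable (at xbar)"
    then obtain f' where D: "(f has_derivative f') (at xbar)" unfolding differentiable_def by blast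
    show "msum (regular_coderiv_fun f xbar w) (regular_coderiv F xbar (vbar - f xbar) w)
                 \<subseteq> regular_coderiv (map_plus f F) xbar vbar w" using P1 by blast
    show "regular_coderiv (map_plus f F) xbar vbar w \<subseteq>
        msum (regular_coderiv_fun f xbar w) (regular_coderiv F xbar (vbar - f xbar) w)"
    proof
      fix p assume p: "p \<in> regular_coderiv (map_plus f F) xbar vbar w"
      have "p = adjoint f' w + (p - adjoint f' w)" by simp
      moreover have "adjoint f' w \<in> regular_coderiv_fun f xbar w" by (rule part2u[OF D])
      moreover have "p - adjoint f' w \<in> regular_coderiv F xbar (vbar - f xbar) w"
        by (rule part2p[OF l U cal D p])
      ultimately show "p \<in> msum (regular_coderiv_fun f xbar w) (regular_coderiv F xbar (vbar - f xbar) w)"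
        unfolding msum_def by blast
    qed
  qed
  ultimately show ?thesis by blast
qed

end
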